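(* Suppose that for every integer $\ell \ge 4$, $\pi(K^3_\ell) = 1-\left(\frac{2}{\ell-1}\right)^2$ (Turán's conjecture). Then the stability number of $K_4^3$ is infinite, i.e. $\xi(K_4^3)=\infty$.
   Context: $K^3_\ell$ is the complete $3$-graph on $\ell$ vertices. For a family $\mathcal{F}$ of $r$-graphs ($r$-uniform hypergraphs), $\mathcal{F}$-free means containing no member of $\mathcal{F}$ as a subgraph, $\mathrm{ex}(n,\mathcal{F})$ is the maximum number of edges of an $\mathcal{F}$-free $r$-graph on $n$ vertices, and $\pi(\mathcal{F})=\lim_{n\to\infty}\mathrm{ex}(n,\mathcal{F})/\binom{n}{r}$. $t$-stable: for integers $r\ge2$, $t\ge1$, a family $\mathcal{F}$ of $r$-graphs is $t$-stable if there exist $m_0$ and, for every $m\ge m_0$, $r$-graphs $\mathcal{H}^1_m,\dots,\mathcal{H}^t_m$ on $m$ vertices such that: for every $\delta>0$ there exist $\epsilon>0$ and $n_0$ such that for all $n\ge n_0$, every $\mathcal{F}$-free $r$-graph $\mathcal{H}$ on $n$ vertices with $|\mathcal{H}|>(1-\epsilon)\mathrm{ex}(n,\mathcal{F})$ can be transformed into (an isomorphic copy of) some $\mathcal{H}^i_n$ by adding and removing at most $\delta|\mathcal{H}|$ edges. The stability number $\xi(\mathcal{F})$ is the minimum $t$ such that $\mathcal{F}$ is $t$-stable, and $\xi(\mathcal{F})=\infty$ if no such $t$ exists. *)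

theory Defs
  imports Complex_Main "HOL-Library.Extended_Nat"
begin

text \<open>A (labelled) r-graph F on k vertices is represented by the pair (k, F).\<close>

definition is_rgraph :: "nat \<Rightarrow> nat \<Rightarrow> nat set set \<Rightarrow> bool" where
  "is_rgraph r n H \<longleftrightarrow> (\<forall>e\<in>H. e \<subseteq> {..<n} \<and> card e = r)"

definition contains_copy :: "nat \<Rightarrow> nat set set \<Rightarrow> nat \<Rightarrow> nat set set \<Rightarrow> bool" where
  "contains_copy n H k F \<longleftrightarrow>
     (\<exists>f. inj_on f {..<k} \<and> f ` {..<k} \<subseteq> {..<n} \<and> (\<forall>e\<in>F. f ` e \<in> H))"

definition family_free :: "(nat \<times> nat set set) set \<Rightarrow> nat \<Rightarrow> nat set set \<Rightarrow> bool" where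
  "family_free \<F> n H \<longleftrightarrow> (\<forall>(k, F)\<in>\<F>. \<not> contains_copy n H k F)"

definition ex_num :: "nat \<Rightarrow> (nat \<times> nat set set) set \<Rightarrow> nat \<Rightarrow> nat" where
  "ex_num r \<F> n = Max {card H | H. is_rgraph r n H \<and> family_free \<F> n H}"

definition turan_density :: "nat \<Rightarrow> (nat \<times> nat set set) set \<Rightarrow> real" where
  "turan_density r \<F> = lim (\<lambda>n. real (ex_num r \<F> n) / real (n choose r))"

definition K3 :: "nat \<Rightarrow> nat \<times> nat set set" where
  "K3 l = (l, {e. e \<subseteq> {..<l} \<and> card e = 3})"

text \<open>Hs m i is the r-graph H^i_m on m vertices (i = 1..t).
  "Transformed into an isomorphic copy of H^i_n by adding and removing at most
  delta |H| edges": some permutation sigma of the vertices with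
  |H symmetric-difference sigma(H^i_n)| <= delta |H|.\<close>
definition t_stable :: "nat \<Rightarrow> (nat \<times> nat set set) set \<Rightarrow> nat \<Rightarrow> bool" where
  "t_stable r \<F> t \<longleftrightarrow>
     (\<exists>m0 (Hs :: nat \<Rightarrow> nat \<Rightarrow> nat set set).
        (\<forall>m\<ge>m0. \<forall>i\<in>{1..t}. is_rgraph r m (Hs m i)) \<and>
        (\<forall>\<delta>::real. \<delta> > 0 \<longrightarrow> (\<exists>\<epsilon>::real. \<epsilon> > 0 \<and> (\<exists>n0::nat. \<forall>n\<ge>n0. \<forall>H.
            is_rgraph r n H \<and> family_free \<F> n H \<and>
            real (card H) > (1 - \<epsilon>) * real (ex_num r \<F> n) \<longrightarrow>
            (\<exists>i\<in>{1..t}. \<exists>\<sigma>. bij_betw \<sigma> {..<n} {..<n} \<and>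
               real (card ((H - (image \<sigma>) ` Hs n i) \<union> ((image \<sigma>) ` Hs n i - H)))
                 \<le> \<delta> * real (card H))))))"

definition stability_number :: "nat \<Rightarrow> (nat \<times> nat set set) set \<Rightarrow> enat" where
  "stability_number r \<F> =
     (if \<exists>t\<ge>1. t_stable r \<F> t then enat (LEAST t. t \<ge> 1 \<and> t_stable r \<F> t) else \<infinity>)"

end

theory Submission
  imports Defs
begin

abbreviation K4e :: "nat set set" where "K4e \<equiv> {e. e \<subseteq> {..<4} \<and> card e = 3}"
abbreviation exK :: "nat \<Rightarrow> nat" where "exK n \<equiv> ex_num 3 {K3 4} n"

lemma free_K4: "family_free {K3 4} n H \<longleftrightarrow> \<not> contains_copy n H 4 K4e"
  by (simp add: family_free_def K3_def)

lemma rgraph_Pow: "is_rgraph r n H \<Longrightarrow> H \<subseteq> Pow {..<n}"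
  by (auto simp: is_rgraph_def)

lemma fin_cards: "finite {card H |H. is_rgraph r n H \<and> family_free F n H}"
proof -
  have "{card H |H. is_rgraph r n H \<and> family_free F n H} \<subseteq> card ` Pow (Pow {..<n})"
    using rgraph_Pow by blast
  then show ?thesis by (rule finite_subset) simp
qed

lemma ex_ge: "is_rgraph r n H \<Longrightarrow> family_free F n H \<Longrightarrow> card H \<le> ex_num r F n"
  unfolding ex_num_def by (rule Max_ge[OF fin_cards]) blast

lemma empty_free: "family_free {K3 4} n {}"
  unfolding free_K4 contains_copy_def
proof
  assume "\<exists>f. inj_on f {..<4} \<and> f ` {..<4} \<subseteq> {..<n} \<and> (\<forall>e\<in>K4e. f ` e \<in> {})"
  moreover have "{0,1,2::nat} \<in> K4e" by simp
  ultimately show False by blast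
qed

lemma ex_att: "\<exists>H. is_rgraph 3 n H \<and> family_free {K3 4} n H \<and> card H = exK n"
proof -
  have ne: "{card H |H. is_rgraph 3 n H \<and> family_free {K3 4} n H} \<noteq> {}"
    using empty_free[of n] by (auto simp: is_rgraph_def)
  from Max_in[OF fin_cards ne] show ?thesis unfolding ex_num_def
    by (smt (verit, best) mem_Collect_eq)
qed

definition tau :: "nat \<Rightarrow> nat \<Rightarrow> nat \<Rightarrow> nat" where
  "tau v n x = (if x = v then n else if x = n then v else x)"

lemma tau_tau[simp]: "tau v n (tau v n x) = x"
  by (simp add: tau_def)

lemma inj_tau: "inj (tau v n)"
  by (metis injI tau_tau)

lemma del_card:
  assumes H: "is_rgraph 3 (Suc n) H" "family_free {K3 4} (Suc n) H" and v: "v \<le> n"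
  shows "card {e\<in>H. v \<notin> e} \<le> exK n"
proof -
  let ?Hv = "{e\<in>H. v \<notin> e}"
  let ?H' = "image (tau v n) ` ?Hv"
  have inj1: "inj_on (image (tau v n)) ?Hv"
    using inj_tau by (metis inj_image_eq_iff inj_onI)
  have rg: "is_rgraph 3 n ?H'"
    unfolding is_rgraph_def
  proof
    fix e' assume "e' \<in> ?H'"
    then obtain e where e: "e \<in> H" "v \<notin> e" "e' = tau v n ` e" by auto
    have "e \<subseteq> {..<Suc n}" "card e = 3" using H(1) e(1) by (auto simp: is_rgraph_def)
    then have "tau v n ` e \<subseteq> {..<n}" using e(2) v
      by (auto simp: tau_def)
    moreover have "card (tau v n ` e) = 3"
      using \<open>card e = 3\<close> card_image inj_tau by (metis inj_on_subset subset_UNIV)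
    ultimately show "e' \<subseteq> {..<n} \<and> card e' = 3" using e(3) by simp
  qed
  have fr: "family_free {K3 4} n ?H'"
    unfolding free_K4 contains_copy_def
  proof
    assume "\<exists>f. inj_on f {..<4} \<and> f ` {..<4} \<subseteq> {..<n} \<and> (\<forall>e\<in>K4e. f ` e \<in> ?H')"
    then obtain f where f: "inj_on f {..<4}" "f ` {..<4} \<subseteq> {..<n}" "\<forall>e\<in>K4e. f ` e \<in> ?H'"
      by blast
    have "contains_copy (Suc n) H 4 K4e"
      unfolding contains_copy_def
    proof (intro exI conjI)
      show "inj_on (tau v n \<circ> f) {..<4}"
        by (intro comp_inj_on f(1) inj_on_subset[OF inj_tau]) simp
      show "(tau v n \<circ> f) ` {..<4} \<subseteq> {..<Suc n}"
      proof (rule subsetI)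
        fix y assume "y \<in> (tau v n \<circ> f) ` {..<4}"
        then obtain x where x: "x < 4" "y = tau v n (f x)" by auto
        have "f x < n" using f(2) x(1) by auto
        then show "y \<in> {..<Suc n}" using v x(2) by (simp add: tau_def)
      qed
      show "\<forall>e\<in>K4e. (tau v n \<circ> f) ` e \<in> H"
      proof
        fix e assume "e \<in> K4e"
        then have "f ` e \<in> ?H'" using f(3) by simp
        then obtain e0 where "e0 \<in> ?Hv" "f ` e = tau v n ` e0" by (rule imageE) simp
        then have "e0 \<in> H" by simp
        have "tau v n ` (tau v n ` e0) = e0" by (simp add: image_image)
        have "(tau v n \<circ> f) ` e = tau v n ` (f ` e)" by (simp only: image_comp)
        also have "\<dots> = e0" using \<open>f ` e = tau v n ` e0\<close> \<open>tau v n ` (tau v n ` e0) = e0\<close> by simp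
        finally have "(tau v n \<circ> f) ` e = e0" .
        then show "(tau v n \<circ> f) ` e \<in> H" using \<open>e0 \<in> H\<close> by simp
      qed
    qed
    then show False using H(2) free_K4 by blast
  qed
  have "card ?H' = card ?Hv" using card_image[OF inj1] .
  then show ?thesis using ex_ge[OF rg fr] by simp
qed

lemma sum_notin:
  assumes "is_rgraph 3 (Suc n) H"
  shows "(\<Sum>v\<le>n. card {e\<in>H. v \<notin> e}) = (n - 2) * card H"
proof -
  have fin: "finite H" using rgraph_Pow[OF assms] by (rule finite_subset) simp
  have "(\<Sum>v\<le>n. card {e\<in>H. v \<notin> e}) = (\<Sum>v\<le>n. \<Sum>e\<in>H. if v \<notin> e then 1 else 0)"
  proof (rule sum.cong[OF refl])
    fix v show "card {e\<in>H. v \<notin> e} = (\<Sum>e\<in>H. if v \<notin> e then 1 else 0)"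
      using sum.inter_filter[OF fin, of "\<lambda>_. 1::nat" "\<lambda>e. v \<notin> e"] by simp
  qed
  also have "\<dots> = (\<Sum>e\<in>H. \<Sum>v\<le>n. if v \<notin> e then 1 else 0)" by (rule sum.swap)
  also have "\<dots> = (\<Sum>e\<in>H. n - 2)"
  proof (rule sum.cong[OF refl])
    fix e assume "e \<in> H"
    then have e: "e \<subseteq> {..n}" "card e = 3" using assms by (auto simp: is_rgraph_def less_Suc_eq_le subset_iff)
    have "(\<Sum>v\<le>n. if v \<notin> e then 1 else 0) = card ({..n} - e)"
      by (simp add: sum.If_cases Diff_eq Int_commute Compl_eq)
    also have "\<dots> = Suc n - 3" using e by (simp add: card_Diff_subset finite_subset)
    finally show "(\<Sum>v\<le>n. if v \<notin> e then 1 else 0) = n - 2" by simp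
  qed
  finally show ?thesis by simp
qed

lemma ex_step: "(n - 2) * exK (Suc n) \<le> Suc n * exK n"
proof -
  obtain H where H: "is_rgraph 3 (Suc n) H" "family_free {K3 4} (Suc n) H" "card H = exK (Suc n)"
    using ex_att by blast
  have "(n - 2) * exK (Suc n) = (\<Sum>v\<le>n. card {e\<in>H. v \<notin> e})" using sum_notin[OF H(1)] H(3) by simp
  also have "\<dots> \<le> (\<Sum>v\<le>n. exK n)" by (rule sum_mono) (use del_card[OF H(1,2)] in auto)
  also have "\<dots> = Suc n * exK n" by simp
  finally show ?thesis .
qed

definition aseq :: "nat \<Rightarrow> real" where "aseq n = real (exK n) / real (n choose 3)"

lemma aseq_dec: assumes "n \<ge> 3" shows "aseq (Suc n) \<le> aseq n"
proof -
  have c: "(Suc n - 3) * (Suc n choose 3) = Suc n * (n choose 3)"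
    using binomial_absorb_comp[of "Suc n" 3] by simp
  have c2: "(n - 2) * (Suc n choose 3) = Suc n * (n choose 3)"
  proof -
    have "Suc n - 3 = n - 2" by simp
    then show ?thesis using c by (simp only:)
  qed
  define A where "A = real (exK (Suc n))"
  define B where "B = real (exK n)"
  define c0 where "c0 = real (n choose 3)"
  define c1 where "c1 = real (Suc n choose 3)"
  define d where "d = real (n - 2)"
  define s where "s = real (Suc n)"
  have pos: "c0 > 0" unfolding c0_def using assms by simp
  have pos2: "c1 > 0" unfolding c1_def using assms by simp
  have e: "d * A \<le> s * B"
    using of_nat_mono[OF ex_step[of n], where 'a=real] unfolding d_def A_def s_def B_def of_nat_mult .
  have c': "d * c1 = s * c0"
    using arg_cong[where f=real, OF c2] unfolding d_def c1_def s_def c0_def of_nat_mult .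
  have n2: "d > 0" unfolding d_def using assms by simp
  have "d * A * c0 \<le> s * B * c0" by (rule mult_right_mono[OF e]) (use pos in simp)
  also have "s * B * c0 = B * (s * c0)" by simp
  also have "\<dots> = B * (d * c1)" using c' by simp
  finally have "d * (A * c0) \<le> d * (B * c1)" by (simp add: ac_simps)
  then have "A * c0 \<le> B * c1" using n2 by simp
  then have "A / c1 \<le> B / c0" using pos pos2 by (simp add: divide_simps)
  then show ?thesis unfolding aseq_def A_def B_def c0_def c1_def .
qed

lemma aseq_lim: "\<exists>L. aseq \<longlonglongrightarrow> L"
proof -
  have "decseq (\<lambda>i. aseq (i + 3))"
  proof (rule decseq_SucI)
    fix i show "aseq (Suc i + 3) \<le> aseq (i + 3)" using aseq_dec[of "i+3"] by simp
  qed
  moreover have "\<forall>i. 0 \<le> aseq (i + 3)" by (simp add: aseq_def)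
  ultimately obtain L where "(\<lambda>i. aseq (i + 3)) \<longlonglongrightarrow> L" by (rule decseq_convergent)
  then have "aseq \<longlonglongrightarrow> L" by (rule LIMSEQ_offset)
  then show ?thesis by (rule exI)
qed

lemma aseq_tendsto:
  assumes "\<forall>l::nat\<ge>4. turan_density 3 {K3 l} = 1 - (2 / (real l - 1))^2"
  shows "aseq \<longlonglongrightarrow> 5/9"
proof -
  obtain L where L: "aseq \<longlonglongrightarrow> L" using aseq_lim by (elim exE)
  have "turan_density 3 {K3 4} = 5/9" using assms by (simp add: power2_eq_square)
  moreover have "turan_density 3 {K3 4} = lim aseq" unfolding turan_density_def aseq_def by simp
  ultimately have "lim aseq = 5/9" by simp
  moreover have "lim aseq = L" using L by (rule limI)
  ultimately have "L = 5/9" by simp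
  with L show ?thesis by simp
qed

definition ind :: "bool \<Rightarrow> real" where "ind b = (if b then 1 else 0)"

lemma ind_ge0[simp]: "0 \<le> ind b" and ind_le1[simp]: "ind b \<le> 1"
  by (auto simp: ind_def)

definition E3 :: "nat set set \<Rightarrow> nat \<Rightarrow> real" where
  "E3 G n = (\<Sum>x<n. \<Sum>y<n. \<Sum>z<n. ind ({x,y,z} \<in> G))"

definition QQ :: "nat set set \<Rightarrow> nat \<Rightarrow> real" where
  "QQ G n = (\<Sum>x<n. \<Sum>y<n. \<Sum>z<n. \<Sum>w<n. ind ({x,y,z} \<in> G \<and> {x,y,w} \<in> G))"

lemma card_filter_ind: "finite S \<Longrightarrow> real (card {p\<in>S. P p}) = (\<Sum>p\<in>S. ind (P p))"
  by (simp add: ind_def sum.inter_filter[symmetric])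

lemma sum3_card:
  fixes n :: nat
  shows "(\<Sum>x<n. \<Sum>y<n. \<Sum>z<n. ind (P x y z)) = real (card {(x,y,z). x<n \<and> y<n \<and> z<n \<and> P x y z})"
proof -
  have "(\<Sum>x<n. \<Sum>y<n. \<Sum>z<n. ind (P x y z)) = (\<Sum>x<n. \<Sum>(y,z)\<in>{..<n}\<times>{..<n}. ind (P x y z))"
    by (simp add: sum.cartesian_product)
  also have "\<dots> = (\<Sum>(x,yz)\<in>{..<n}\<times>({..<n}\<times>{..<n}). (case yz of (y,z) \<Rightarrow> ind (P x y z)))"
    by (simp add: sum.cartesian_product)
  also have "\<dots> = (\<Sum>p\<in>{..<n}\<times>{..<n}\<times>{..<n}. ind (case p of (x,y,z) \<Rightarrow> P x y z))"
    by (intro sum.cong refl) (auto split: prod.splits)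
  also have "\<dots> = real (card {p\<in>{..<n}\<times>{..<n}\<times>{..<n}. case p of (x,y,z) \<Rightarrow> P x y z})"
    by (rule card_filter_ind[symmetric]) (metis finite_cartesian_product finite_lessThan)
  also have "{p\<in>{..<n}\<times>{..<n}\<times>{..<n}. case p of (x,y,z) \<Rightarrow> P x y z} = {(x,y,z). x<n \<and> y<n \<and> z<n \<and> P x y z}"
    by auto
  finally show ?thesis .
qed

lemma trip6:
  fixes e :: "nat set"
  assumes "card e = 3"
  shows "card {(x,y,z). {x,y,z} = e} = 6"
proof -
  obtain a b c where e: "e = {a,b,c}" "a \<noteq> b" "b \<noteq> c" "a \<noteq> c"
    using assms card_3_iff by metis
  have "{(x,y,z). {x,y,z} = e} = {(a,b,c),(a,c,b),(b,a,c),(b,c,a),(c,a,b),(c,b,a)}"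
  proof (rule set_eqI)
    fix p :: "nat \<times> nat \<times> nat"
    obtain x y z where p: "p = (x,y,z)" by (cases p) auto
    have "({x,y,z} = e) = ((x,y,z) \<in> {(a,b,c),(a,c,b),(b,a,c),(b,c,a),(c,a,b),(c,b,a)})"
    proof
      assume h: "{x,y,z} = e"
      then have c3: "card {x,y,z} = 3" using assms by simp
      then have d: "x \<noteq> y" "x \<noteq> z" "y \<noteq> z" by (auto simp: card_insert_if split: if_splits)
      have "x \<in> {a,b,c}" "y \<in> {a,b,c}" "z \<in> {a,b,c}" using h e by auto
      then show "(x,y,z) \<in> {(a,b,c),(a,c,b),(b,a,c),(b,c,a),(c,a,b),(c,b,a)}"
        using d by auto
    next
      assume "(x,y,z) \<in> {(a,b,c),(a,c,b),(b,a,c),(b,c,a),(c,a,b),(c,b,a)}"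
      then show "{x,y,z} = e" using e by auto
    qed
    then show "p \<in> {(x,y,z). {x,y,z} = e} \<longleftrightarrow> p \<in> {(a,b,c),(a,c,b),(b,a,c),(b,c,a),(c,a,b),(c,b,a)}"
      using p by simp
  qed
  then show ?thesis using e by simp
qed

lemma E3_card:
  assumes "is_rgraph 3 n G"
  shows "E3 G n = 6 * real (card G)"
proof -
  have fin: "finite G" using rgraph_Pow[OF assms] by (rule finite_subset) simp
  have eq: "{(x,y,z). x<n \<and> y<n \<and> z<n \<and> {x,y,z} \<in> G} = (\<Union>e\<in>G. {(x,y,z). {x,y,z} = e})"
    using assms by (auto simp: is_rgraph_def)
  have "card (\<Union>e\<in>G. {(x,y,z). {x,y,z} = e}) = (\<Sum>e\<in>G. card {(x,y,z). {x,y,z} = e})"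
  proof (rule card_UN_disjoint[OF fin])
    show "\<forall>e\<in>G. finite {(x, y, z). {x, y, z} = e}"
    proof
      fix e assume "e \<in> G"
      then have "card e = 3" using assms by (auto simp: is_rgraph_def)
      then show "finite {(x, y, z). {x, y, z} = e}" using trip6 card.infinite by fastforce
    qed
    show "\<forall>i\<in>G. \<forall>j\<in>G. i \<noteq> j \<longrightarrow> {(x, y, z). {x, y, z} = i} \<inter> {(x, y, z). {x, y, z} = j} = {}"
      by auto
  qed
  also have "\<dots> = (\<Sum>e\<in>G. 6)"
    by (rule sum.cong[OF refl]) (use assms trip6 in \<open>auto simp: is_rgraph_def\<close>)
  finally show ?thesis unfolding E3_def sum3_card eq by simp
qed

lemma E3_le: "E3 G n \<le> real n ^ 3"
proof -
  have "E3 G n \<le> (\<Sum>x<n. \<Sum>y<n. \<Sum>z<n. (1::real))" unfolding E3_def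
    by (intro sum_mono) simp
  then show ?thesis by (simp add: power3_eq_cube)
qed

lemma card_le_cube: "is_rgraph 3 n G \<Longrightarrow> real (card G) \<le> real n ^ 3 / 6"
  using E3_card E3_le by (metis divide_le_eq_1 le_divide_eq_numeral1(1) mult.commute zero_less_numeral)

lemma sum_perm:
  assumes "bij_betw s {..<n} {..<n}"
  shows "(\<Sum>x<n. f (s x)) = (\<Sum>x<n. (f x :: real))"
  using sum.reindex_bij_betw[OF assms] .

lemma img_mem:
  assumes "inj_on s {..<n}" "H \<subseteq> Pow {..<n}" "e \<subseteq> {..<n}"
  shows "(s ` e \<in> image s ` H) = (e \<in> H)"
proof
  assume "s ` e \<in> image s ` H"
  then obtain e' where "e' \<in> H" "s ` e = s ` e'" by auto
  moreover have "inj_on (image s) (Pow {..<n})" using inj_on_image_Pow[OF assms(1)] .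
  ultimately show "e \<in> H" using assms(2,3) by (metis PowI inj_on_contraD subsetD)
qed auto

lemma sum4_perm:
  assumes s: "bij_betw s {..<n} {..<n}"
  shows "(\<Sum>x<n. \<Sum>y<n. \<Sum>z<n. \<Sum>w<n. F (s x) (s y) (s z) (s w)) = (\<Sum>x<n. \<Sum>y<n. \<Sum>z<n. \<Sum>w<n. (F x y z w :: real))"
proof -
  have 1: "(\<Sum>w<n. F a b c (s w)) = (\<Sum>w<n. F a b c w)" for a b c
    using sum_perm[OF s, of "\<lambda>w. F a b c w"] .
  have 2: "(\<Sum>z<n. \<Sum>w<n. F a b (s z) w) = (\<Sum>z<n. \<Sum>w<n. F a b z w)" for a b
    using sum_perm[OF s, of "\<lambda>z. \<Sum>w<n. F a b z w"] .
  have 3: "(\<Sum>y<n. \<Sum>z<n. \<Sum>w<n. F a (s y) z w) = (\<Sum>y<n. \<Sum>z<n. \<Sum>w<n. F a y z w)" for a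
    using sum_perm[OF s, of "\<lambda>y. \<Sum>z<n. \<Sum>w<n. F a y z w"] .
  have 4: "(\<Sum>x<n. \<Sum>y<n. \<Sum>z<n. \<Sum>w<n. F (s x) y z w) = (\<Sum>x<n. \<Sum>y<n. \<Sum>z<n. \<Sum>w<n. F x y z w)"
    using sum_perm[OF s, of "\<lambda>x. \<Sum>y<n. \<Sum>z<n. \<Sum>w<n. F x y z w"] .
  show ?thesis by (simp only: 1 2 3 4)
qed

lemma QQ_perm:
  assumes s: "bij_betw s {..<n} {..<n}" and H: "H \<subseteq> Pow {..<n}"
  shows "QQ (image s ` H) n = QQ H n"
proof -
  have inj: "inj_on s {..<n}" using s bij_betw_def by blast
  have key: "x < n \<Longrightarrow> y < n \<Longrightarrow> z < n \<Longrightarrow> ({s x, s y, s z} \<in> image s ` H) = ({x,y,z} \<in> H)" for x y z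
    using img_mem[OF inj H, of "{x,y,z}"] by simp
  have "QQ (image s ` H) n = (\<Sum>x<n. \<Sum>y<n. \<Sum>z<n. \<Sum>w<n. ind ({s x,s y,s z} \<in> image s ` H \<and> {s x,s y,s w} \<in> image s ` H))"
    unfolding QQ_def by (rule sum4_perm[OF s, symmetric])
  also have "\<dots> = QQ H n" unfolding QQ_def
    by (intro sum.cong refl) (simp add: key)
  finally show ?thesis .
qed

lemma ind_diff: "\<bar>ind (a \<and> b) - ind (c \<and> d)\<bar> \<le> ind (a \<noteq> c) + ind (b \<noteq> d)"
  by (auto simp: ind_def)

lemma QQ_lip:
  "\<bar>QQ G n - QQ K n\<bar> \<le> 2 * real n * E3 ((G - K) \<union> (K - G)) n"
proof -
  let ?D = "(G - K) \<union> (K - G)"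
  have m: "ind (({x,y,z} \<in> G) \<noteq> ({x,y,z} \<in> K)) = ind ({x,y,z} \<in> ?D)" for x y z
    by (auto simp: ind_def)
  have "\<bar>QQ G n - QQ K n\<bar> = \<bar>\<Sum>x<n. \<Sum>y<n. \<Sum>z<n. \<Sum>w<n. ind ({x,y,z} \<in> G \<and> {x,y,w} \<in> G) - ind ({x,y,z} \<in> K \<and> {x,y,w} \<in> K)\<bar>"
    unfolding QQ_def by (simp add: sum_subtractf)
  also have "\<dots> \<le> (\<Sum>x<n. \<Sum>y<n. \<Sum>z<n. \<Sum>w<n. \<bar>ind ({x,y,z} \<in> G \<and> {x,y,w} \<in> G) - ind ({x,y,z} \<in> K \<and> {x,y,w} \<in> K)\<bar>)"
    by (rule order_trans[OF sum_abs], rule sum_mono, rule order_trans[OF sum_abs], rule sum_mono,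
        rule order_trans[OF sum_abs], rule sum_mono, rule sum_abs)
  also have "\<dots> \<le> (\<Sum>x<n. \<Sum>y<n. \<Sum>z<n. \<Sum>w<n. ind ({x,y,z} \<in> ?D) + ind ({x,y,w} \<in> ?D))"
    by (intro sum_mono) (metis ind_diff m)
  also have "\<dots> = (\<Sum>x<n. \<Sum>y<n. \<Sum>z<n. \<Sum>w<n. ind ({x,y,z} \<in> ?D)) + (\<Sum>x<n. \<Sum>y<n. \<Sum>z<n. \<Sum>w<n. ind ({x,y,w} \<in> ?D))"
    by (simp add: sum.distrib)
  also have "(\<Sum>x<n. \<Sum>y<n. \<Sum>z<n. \<Sum>w<n. ind ({x,y,z} \<in> ?D)) = real n * E3 ?D n"
    unfolding E3_def by (simp add: sum_distrib_left)
  also have "(\<Sum>x<n. \<Sum>y<n. \<Sum>z<n. \<Sum>w<n. ind ({x,y,w} \<in> ?D)) = real n * E3 ?D n"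
    unfolding E3_def by (simp add: sum_distrib_left)
  finally show ?thesis by simp
qed

definition Pat :: "nat \<Rightarrow> nat \<Rightarrow> nat \<Rightarrow> bool" where
"Pat p q r \<longleftrightarrow> (if p = 0 then (if q = 0 then r \<in> {2,3} else if q = 1 then r \<in> {1,2,3,5} else if q = 2 then r \<in> {0,1,4,5} else if q = 3 then r \<in> {0,1,4,5} else if q = 4 then r \<in> {2,3,4} else if q = 5 then r \<in> {1,2,3} else False)
  else if p = 1 then (if q = 0 then r \<in> {1,2,3,5} else if q = 1 then r \<in> {0,4} else if q = 2 then r \<in> {0,2,3,4} else if q = 3 then r \<in> {0,2,4} else if q = 4 then r \<in> {1,2,3,5} else if q = 5 then r \<in> {0,4,5} else False)
  else if p = 2 then (if q = 0 then r \<in> {0,1,4,5} else if q = 1 then r \<in> {0,2,3,4} else if q = 2 then r \<in> {1,5} else if q = 3 then r \<in> {1,3,5} else if q = 4 then r \<in> {0,1,5} else if q = 5 then r \<in> {0,2,3,4} else False)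
  else if p = 3 then (if q = 0 then r \<in> {0,1,4,5} else if q = 1 then r \<in> {0,2,4} else if q = 2 then r \<in> {1,3,5} else if q = 3 then r \<in> {2,4} else if q = 4 then r \<in> {0,1,3,5} else if q = 5 then r \<in> {0,2,4,5} else False)
  else if p = 4 then (if q = 0 then r \<in> {2,3,4} else if q = 1 then r \<in> {1,2,3,5} else if q = 2 then r \<in> {0,1,5} else if q = 3 then r \<in> {0,1,3,5} else if q = 4 then r \<in> {0,5} else if q = 5 then r \<in> {1,2,3,4} else False)
  else if p = 5 then (if q = 0 then r \<in> {1,2,3} else if q = 1 then r \<in> {0,4,5} else if q = 2 then r \<in> {0,2,3,4} else if q = 3 then r \<in> {0,2,4,5} else if q = 4 then r \<in> {1,2,3,4} else if q = 5 then r \<in> {1,3} else False) else False)"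

lemma Pat_lt: "Pat p q r \<Longrightarrow> p < 6 \<and> q < 6 \<and> r < 6"
  unfolding Pat_def by (auto split: if_splits)

lemma six: "{..<6::nat} = {0,1,2,3,4,5}" by auto

lemma Pat_sym1_fin: "\<forall>p\<in>{0,1,2,3,4,5}. \<forall>q\<in>{0,1,2,3,4,5}. \<forall>r\<in>{0,1,2,3,4,5}. Pat p q r = Pat q p r"
  by code_simp

lemma Pat_sym2_fin: "\<forall>p\<in>{0,1,2,3,4,5}. \<forall>q\<in>{0,1,2,3,4,5}. \<forall>r\<in>{0,1,2,3,4,5}. Pat p q r = Pat p r q"
  by code_simp

lemma noK4_fin: "\<forall>p\<in>{0,1,2,3,4,5}. \<forall>q\<in>{0,1,2,3,4,5}. \<forall>r\<in>{0,1,2,3,4,5}. \<forall>u\<in>{0,1,2,3,4,5}.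
   \<not> (Pat p q r \<and> Pat p q u \<and> Pat p r u \<and> Pat q r u)"
  by code_simp

lemma lt6: "p < (6::nat) \<Longrightarrow> p \<in> {0,1,2,3,4,5}" by auto

lemma Pat_sym1: "Pat p q r = Pat q p r"
proof (cases "p < 6 \<and> q < 6 \<and> r < 6")
  case True then show ?thesis using Pat_sym1_fin lt6 by blast
next
  case False then show ?thesis using Pat_lt by blast
qed

lemma Pat_sym2: "Pat p q r = Pat p r q"
proof (cases "p < 6 \<and> q < 6 \<and> r < 6")
  case True then show ?thesis using Pat_sym2_fin lt6 by blast
next
  case False then show ?thesis using Pat_lt by blast
qed

lemma noK4: "\<not> (Pat p q r \<and> Pat p q u \<and> Pat p r u \<and> Pat q r u)"
proof
  assume h: "Pat p q r \<and> Pat p q u \<and> Pat p r u \<and> Pat q r u"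
  then have "p \<in> {0,1,2,3,4,5}" "q \<in> {0,1,2,3,4,5}" "r \<in> {0,1,2,3,4,5}" "u \<in> {0,1,2,3,4,5}"
    using Pat_lt lt6 by blast+
  then show False using noK4_fin h by blast
qed

definition Lab :: "nat \<Rightarrow> nat \<Rightarrow> nat \<Rightarrow> nat" where
  "Lab k m x = (if x < k then 0 else if x < 2*k then 1 else if x < 3*k then 2
     else if x < 3*k + (m-k) then 3 else if x < 3*k + 2*(m-k) then 4 else 5)"

lemma Lab_lt: "Lab k m x < 6" by (simp add: Lab_def)

definition sz :: "nat \<Rightarrow> nat \<Rightarrow> nat \<Rightarrow> real" where
  "sz k m p = (if p < 3 then real k else real (m - k))"

lemma fiber_card:
  assumes "k \<le> m" "p < 6"
  shows "real (card {x\<in>{..<3*m}. Lab k m x = p}) = sz k m p"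
proof -
  have "p \<in> {0,1,2,3,4,5}" using assms(2) by auto
  then consider "p = 0" | "p = 1" | "p = 2" | "p = 3" | "p = 4" | "p = 5" by blast
  then show ?thesis
  proof cases
    case 1
    then have "{x\<in>{..<3*m}. Lab k m x = p} = {0..<k}" using assms by (auto simp: Lab_def)
    then show ?thesis using 1 by (simp add: sz_def)
  next
    case 2
    then have "{x\<in>{..<3*m}. Lab k m x = p} = {k..<2*k}" using assms by (auto simp: Lab_def)
    then show ?thesis using 2 by (simp add: sz_def)
  next
    case 3
    then have "{x\<in>{..<3*m}. Lab k m x = p} = {2*k..<3*k}" using assms by (auto simp: Lab_def)
    then show ?thesis using 3 by (simp add: sz_def)
  next
    case 4
    then have "{x\<in>{..<3*m}. Lab k m x = p} = {3*k..<3*k+(m-k)}" using assms by (auto simp: Lab_def)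
    then show ?thesis using 4 by (simp add: sz_def)
  next
    case 5
    then have "{x\<in>{..<3*m}. Lab k m x = p} = {3*k+(m-k)..<3*k+2*(m-k)}" using assms by (auto simp: Lab_def)
    then show ?thesis using 5 by (simp add: sz_def)
  next
    case 6
    then have "{x\<in>{..<3*m}. Lab k m x = p} = {3*k+2*(m-k)..<3*m}" using assms by (auto simp: Lab_def)
    then show ?thesis using 6 assms(1) by (simp add: sz_def)
  qed
qed

lemma fiber_sum:
  assumes "k \<le> m"
  shows "(\<Sum>x<3*m. f (Lab k m x)) = (\<Sum>p<6. sz k m p * (f p :: real))"
proof -
  have "(\<Sum>x<3*m. f (Lab k m x)) = (\<Sum>p<6. \<Sum>x\<in>{x\<in>{..<3*m}. Lab k m x = p}. f (Lab k m x))"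
    by (rule sum.group[symmetric]) (auto simp: Lab_lt)
  also have "\<dots> = (\<Sum>p<6. \<Sum>x\<in>{x\<in>{..<3*m}. Lab k m x = p}. f p)"
    by (intro sum.cong refl) auto
  also have "\<dots> = (\<Sum>p<6. sz k m p * f p)"
  proof (rule sum.cong[OF refl])
    fix p assume "p \<in> {..<6::nat}"
    then show "(\<Sum>x\<in>{x\<in>{..<3*m}. Lab k m x = p}. f p) = sz k m p * f p"
      using fiber_card[OF assms, of p] by simp
  qed
  finally show ?thesis .
qed

definition GG :: "nat \<Rightarrow> nat \<Rightarrow> nat set set" where
  "GG k m = {e. \<exists>x y z. e = {x,y,z} \<and> x < 3*m \<and> y < 3*m \<and> z < 3*m \<and> x \<noteq> y \<and> x \<noteq> z \<and> y \<noteq> z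
      \<and> Pat (Lab k m x) (Lab k m y) (Lab k m z)}"

lemma perm6:
  assumes "{x,y,z} = {a,b,c::nat}" "a \<noteq> b" "b \<noteq> c" "a \<noteq> c"
  shows "(x,y,z) \<in> {(a,b,c),(a,c,b),(b,a,c),(b,c,a),(c,a,b),(c,b,a)}"
proof -
  have "card {x,y,z} = 3" using assms by simp
  then have d: "x \<noteq> y" "x \<noteq> z" "y \<noteq> z" by (auto simp: card_insert_if split: if_splits)
  have "x \<in> {a,b,c}" "y \<in> {a,b,c}" "z \<in> {a,b,c}" using assms by auto
  then show ?thesis using d by auto
qed

lemma memGG:
  assumes "x < 3*m" "y < 3*m" "z < 3*m"
  shows "({x,y,z} \<in> GG k m) = (x \<noteq> y \<and> x \<noteq> z \<and> y \<noteq> z \<and> Pat (Lab k m x) (Lab k m y) (Lab k m z))"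
proof
  assume "{x,y,z} \<in> GG k m"
  then obtain a b c where abc: "{x,y,z} = {a,b,c}" "a \<noteq> b" "a \<noteq> c" "b \<noteq> c"
    and P: "Pat (Lab k m a) (Lab k m b) (Lab k m c)"
    unfolding GG_def by blast
  have "card {x,y,z} = 3" using abc by simp
  then have d: "x \<noteq> y" "x \<noteq> z" "y \<noteq> z" by (auto simp: card_insert_if split: if_splits)
  have "(x,y,z) \<in> {(a,b,c),(a,c,b),(b,a,c),(b,c,a),(c,a,b),(c,b,a)}"
    using perm6[OF abc(1)] abc by blast
  then have "Pat (Lab k m x) (Lab k m y) (Lab k m z)"
    using P Pat_sym1 Pat_sym2 by auto
  then show "x \<noteq> y \<and> x \<noteq> z \<and> y \<noteq> z \<and> Pat (Lab k m x) (Lab k m y) (Lab k m z)" using d by simp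
next
  assume "x \<noteq> y \<and> x \<noteq> z \<and> y \<noteq> z \<and> Pat (Lab k m x) (Lab k m y) (Lab k m z)"
  then show "{x,y,z} \<in> GG k m" using assms unfolding GG_def by blast
qed

lemma GG_rgraph: "is_rgraph 3 (3*m) (GG k m)"
  unfolding is_rgraph_def GG_def by auto

lemma GG_free: "family_free {K3 4} (3*m) (GG k m)"
  unfolding free_K4 contains_copy_def
proof
  assume "\<exists>f. inj_on f {..<4} \<and> f ` {..<4} \<subseteq> {..<3*m} \<and> (\<forall>e\<in>K4e. f ` e \<in> GG k m)"
  then obtain f where f: "inj_on f {..<4}" "f ` {..<4} \<subseteq> {..<3*m}" "\<forall>e\<in>K4e. f ` e \<in> GG k m"
    by blast
  have lt: "f i < 3*m" if "i < 4" for i using f(2) that by auto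
  have e: "{a,b,c} \<in> K4e" if "a < 4" "b < 4" "c < 4" "a \<noteq> b" "a \<noteq> c" "b \<noteq> c" for a b c :: nat
    using that by simp
  have P: "Pat (Lab k m (f a)) (Lab k m (f b)) (Lab k m (f c))"
    if "a < 4" "b < 4" "c < 4" "a \<noteq> b" "a \<noteq> c" "b \<noteq> c" for a b c :: nat
  proof -
    have "f ` {a,b,c} \<in> GG k m" using f(3) e[OF that] by blast
    then have "{f a, f b, f c} \<in> GG k m" by simp
    then show ?thesis using memGG[OF lt lt lt] that by blast
  qed
  have "Pat (Lab k m (f 0)) (Lab k m (f 1)) (Lab k m (f 2))" by (rule P) auto
  moreover have "Pat (Lab k m (f 0)) (Lab k m (f 1)) (Lab k m (f 3))" by (rule P) auto
  moreover have "Pat (Lab k m (f 0)) (Lab k m (f 2)) (Lab k m (f 3))" by (rule P) auto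
  moreover have "Pat (Lab k m (f 1)) (Lab k m (f 2)) (Lab k m (f 3))" by (rule P) auto
  ultimately show False using noK4 by blast
qed

lemma S3_gen:
  fixes K M :: real
  shows "(\<Sum>p<6. (if p < 3 then K else M) * (\<Sum>q<6. (if q < 3 then K else M) * (\<Sum>r<6. (if r < 3 then K else M) * ind (Pat p q r))))
    = 15 * (K + M) ^ 3"
  unfolding six apply (simp add: Pat_def ind_def)
  by algebra

lemma S4_gen:
  fixes K M :: real
  shows "(\<Sum>p<6. (if p < 3 then K else M) * (\<Sum>q<6. (if q < 3 then K else M) * (\<Sum>r<6. (if r < 3 then K else M) * ind (Pat p q r))^2))
    = 27 * (K + M) ^ 4 - 12 * K ^ 2 * M ^ 2"
  unfolding six apply (simp add: Pat_def ind_def)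
  by algebra

lemma ind_and: "ind (a \<and> b) = ind a * ind b" by (simp add: ind_def)

lemma sz_eq: "sz k m = (\<lambda>p. if p < 3 then real k else real (m - k))"
  by (rule ext) (simp add: sz_def)

lemma sum_PatL:
  assumes km: "k \<le> m"
  shows "(\<Sum>x<3*m. \<Sum>y<3*m. \<Sum>z<3*m. ind (Pat (Lab k m x) (Lab k m y) (Lab k m z)))
     = (\<Sum>p<6. sz k m p * (\<Sum>q<6. sz k m q * (\<Sum>r<6. sz k m r * ind (Pat p q r))))"
proof -
  have "(\<Sum>x<3*m. \<Sum>y<3*m. \<Sum>z<3*m. ind (Pat (Lab k m x) (Lab k m y) (Lab k m z)))
      = (\<Sum>x<3*m. \<Sum>y<3*m. \<Sum>r<6. sz k m r * ind (Pat (Lab k m x) (Lab k m y) r))"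
  proof (rule sum.cong[OF refl], rule sum.cong[OF refl])
    fix x y show "(\<Sum>z<3*m. ind (Pat (Lab k m x) (Lab k m y) (Lab k m z))) = (\<Sum>r<6. sz k m r * ind (Pat (Lab k m x) (Lab k m y) r))"
      by (rule fiber_sum[OF km])
  qed
  also have "\<dots> = (\<Sum>x<3*m. \<Sum>q<6. sz k m q * (\<Sum>r<6. sz k m r * ind (Pat (Lab k m x) q r)))"
  proof (rule sum.cong[OF refl])
    fix x show "(\<Sum>y<3*m. \<Sum>r<6. sz k m r * ind (Pat (Lab k m x) (Lab k m y) r)) = (\<Sum>q<6. sz k m q * (\<Sum>r<6. sz k m r * ind (Pat (Lab k m x) q r)))"
      by (rule fiber_sum[OF km])
  qed
  also have "\<dots> = (\<Sum>p<6. sz k m p * (\<Sum>q<6. sz k m q * (\<Sum>r<6. sz k m r * ind (Pat p q r))))"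
    by (rule fiber_sum[OF km])
  finally show ?thesis .
qed

lemma sum_PatL2:
  assumes km: "k \<le> m"
  shows "(\<Sum>x<3*m. \<Sum>y<3*m. \<Sum>z<3*m. \<Sum>w<3*m. ind (Pat (Lab k m x) (Lab k m y) (Lab k m z) \<and> Pat (Lab k m x) (Lab k m y) (Lab k m w)))
     = (\<Sum>p<6. sz k m p * (\<Sum>q<6. sz k m q * (\<Sum>r<6. sz k m r * ind (Pat p q r))^2))"
proof -
  let ?A = "\<lambda>p q. (\<Sum>r<6. sz k m r * ind (Pat p q r))"
  have "(\<Sum>x<3*m. \<Sum>y<3*m. \<Sum>z<3*m. \<Sum>w<3*m. ind (Pat (Lab k m x) (Lab k m y) (Lab k m z) \<and> Pat (Lab k m x) (Lab k m y) (Lab k m w)))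
      = (\<Sum>x<3*m. \<Sum>y<3*m. (\<Sum>z<3*m. ind (Pat (Lab k m x) (Lab k m y) (Lab k m z))) * (\<Sum>w<3*m. ind (Pat (Lab k m x) (Lab k m y) (Lab k m w))))"
    by (simp add: ind_and sum_product)
  also have "\<dots> = (\<Sum>x<3*m. \<Sum>y<3*m. (?A (Lab k m x) (Lab k m y))^2)"
  proof (rule sum.cong[OF refl], rule sum.cong[OF refl])
    fix x y
    have "(\<Sum>z<3*m. ind (Pat (Lab k m x) (Lab k m y) (Lab k m z))) = ?A (Lab k m x) (Lab k m y)"
      by (rule fiber_sum[OF km])
    then show "(\<Sum>z<3*m. ind (Pat (Lab k m x) (Lab k m y) (Lab k m z))) * (\<Sum>w<3*m. ind (Pat (Lab k m x) (Lab k m y) (Lab k m w))) = (?A (Lab k m x) (Lab k m y))^2"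
      by (simp add: power2_eq_square)
  qed
  also have "\<dots> = (\<Sum>x<3*m. \<Sum>q<6. sz k m q * (?A (Lab k m x) q)^2)"
  proof (rule sum.cong[OF refl])
    fix x show "(\<Sum>y<3*m. (?A (Lab k m x) (Lab k m y))^2) = (\<Sum>q<6. sz k m q * (?A (Lab k m x) q)^2)"
      by (rule fiber_sum[OF km])
  qed
  also have "\<dots> = (\<Sum>p<6. sz k m p * (\<Sum>q<6. sz k m q * (?A p q)^2))"
    by (rule fiber_sum[OF km])
  finally show ?thesis .
qed

lemma sum_ind_eq: "x < n \<Longrightarrow> (\<Sum>y<(n::nat). ind (x = y)) = 1"
  by (simp add: ind_def)
lemma sum_ind_eq': "x < n \<Longrightarrow> (\<Sum>y<(n::nat). ind (y = x)) = 1"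
  by (simp add: ind_def)

lemma sum_eq3: "(\<Sum>x<n. \<Sum>y<n. \<Sum>z<(n::nat). ind (x = y)) = real n ^ 2"
proof -
  have "(\<Sum>x<n. \<Sum>y<n. \<Sum>z<(n::nat). ind (x = y)) = (\<Sum>x<n. real n * (\<Sum>y<n. ind (x = y)))"
    by (simp add: sum_distrib_left)
  also have "\<dots> = (\<Sum>x<n. real n)" by (intro sum.cong refl) (simp add: sum_ind_eq)
  finally show ?thesis by (simp add: power2_eq_square)
qed
lemma sum_eq3b: "(\<Sum>x<n. \<Sum>y<n. \<Sum>z<(n::nat). ind (x = z)) = real n ^ 2"
proof -
  have "(\<Sum>x<n. \<Sum>y<n. \<Sum>z<(n::nat). ind (x = z)) = (\<Sum>x<n. \<Sum>y<n. (1::real))"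
    by (intro sum.cong refl) (simp add: sum_ind_eq)
  then show ?thesis by (simp add: power2_eq_square)
qed
lemma sum_eq3c: "(\<Sum>x<n. \<Sum>y<n. \<Sum>z<(n::nat). ind (y = z)) = real n ^ 2"
proof -
  have "(\<Sum>x<n. \<Sum>y<n. \<Sum>z<(n::nat). ind (y = z)) = (\<Sum>x<n. \<Sum>y<n. (1::real))"
    by (intro sum.cong refl) (simp add: sum_ind_eq)
  then show ?thesis by (simp add: power2_eq_square)
qed

lemma ind_lb3: "ind P - ind (x = y) - ind (x = z) - ind (y = z) \<le> ind (x \<noteq> y \<and> x \<noteq> z \<and> y \<noteq> z \<and> P)"
  by (auto simp: ind_def)

lemma E3_GG_lb:
  assumes km: "k \<le> m"
  shows "15 * real m ^ 3 - 3 * real (3*m) ^ 2 \<le> E3 (GG k m) (3*m)"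
proof -
  let ?n = "3*m"
  have S: "(\<Sum>x<?n. \<Sum>y<?n. \<Sum>z<?n. ind (Pat (Lab k m x) (Lab k m y) (Lab k m z))) = 15 * real m ^ 3"
    unfolding sum_PatL[OF km] sz_eq S3_gen using km by simp
  have "E3 (GG k m) ?n = (\<Sum>x<?n. \<Sum>y<?n. \<Sum>z<?n. ind (x \<noteq> y \<and> x \<noteq> z \<and> y \<noteq> z \<and> Pat (Lab k m x) (Lab k m y) (Lab k m z)))"
    unfolding E3_def by (intro sum.cong refl) (simp add: memGG)
  also have "\<dots> \<ge> (\<Sum>x<?n. \<Sum>y<?n. \<Sum>z<?n. ind (Pat (Lab k m x) (Lab k m y) (Lab k m z)) - ind (x = y) - ind (x = z) - ind (y = z))"
    by (intro sum_mono) (rule ind_lb3)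
  moreover have "(\<Sum>x<?n. \<Sum>y<?n. \<Sum>z<?n. ind (Pat (Lab k m x) (Lab k m y) (Lab k m z)) - ind (x = y) - ind (x = z) - ind (y = z))
     = (\<Sum>x<?n. \<Sum>y<?n. \<Sum>z<?n. ind (Pat (Lab k m x) (Lab k m y) (Lab k m z))) - (\<Sum>x<?n. \<Sum>y<?n. \<Sum>z<?n. ind (x = y))
       - (\<Sum>x<?n. \<Sum>y<?n. \<Sum>z<?n. ind (x = z)) - (\<Sum>x<?n. \<Sum>y<?n. \<Sum>z<?n. ind (y = z))"
    by (simp add: sum_subtractf)
  ultimately show ?thesis unfolding S sum_eq3 sum_eq3b sum_eq3c by simp
qed

lemma ind_lb4: "ind (P1 \<and> P2) - ind (x = y) - ind (x = z) - ind (y = z) - ind (x = w) - ind (y = w)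
   \<le> ind ((x \<noteq> y \<and> x \<noteq> z \<and> y \<noteq> z \<and> P1) \<and> (x \<noteq> y \<and> x \<noteq> w \<and> y \<noteq> w \<and> P2))"
  by (auto simp: ind_def)

lemma ind_ub4: "ind ((x \<noteq> y \<and> x \<noteq> z \<and> y \<noteq> z \<and> P1) \<and> (x \<noteq> y \<and> x \<noteq> w \<and> y \<noteq> w \<and> P2)) \<le> ind (P1 \<and> P2)"
  by (auto simp: ind_def)

lemma s4a: "(\<Sum>x<n. \<Sum>y<n. \<Sum>z<n. \<Sum>w<(n::nat). ind (x = y)) = real n ^ 3"
proof -
  have "(\<Sum>x<n. \<Sum>y<n. \<Sum>z<n. \<Sum>w<(n::nat). ind (x = y)) = (\<Sum>x<n. \<Sum>y<n. \<Sum>z<n. real n * ind (x = y))"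
    by simp
  also have "\<dots> = real n * (\<Sum>x<n. \<Sum>y<n. \<Sum>z<n. ind (x = y))" by (simp add: sum_distrib_left)
  finally show ?thesis using sum_eq3 by (simp add: power2_eq_square power3_eq_cube)
qed
lemma s4b: "(\<Sum>x<n. \<Sum>y<n. \<Sum>z<n. \<Sum>w<(n::nat). ind (x = z)) = real n ^ 3"
proof -
  have "(\<Sum>x<n. \<Sum>y<n. \<Sum>z<n. \<Sum>w<(n::nat). ind (x = z)) = (\<Sum>x<n. \<Sum>y<n. \<Sum>z<n. real n * ind (x = z))"
    by simp
  also have "\<dots> = real n * (\<Sum>x<n. \<Sum>y<n. \<Sum>z<n. ind (x = z))" by (simp add: sum_distrib_left)
  finally show ?thesis using sum_eq3b by (simp add: power2_eq_square power3_eq_cube)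
qed
lemma s4c: "(\<Sum>x<n. \<Sum>y<n. \<Sum>z<n. \<Sum>w<(n::nat). ind (y = z)) = real n ^ 3"
proof -
  have "(\<Sum>x<n. \<Sum>y<n. \<Sum>z<n. \<Sum>w<(n::nat). ind (y = z)) = (\<Sum>x<n. \<Sum>y<n. \<Sum>z<n. real n * ind (y = z))"
    by simp
  also have "\<dots> = real n * (\<Sum>x<n. \<Sum>y<n. \<Sum>z<n. ind (y = z))" by (simp add: sum_distrib_left)
  also have "\<dots> = real n * real n ^ 2" by (simp only: sum_eq3c)
  finally show ?thesis by (simp add: power2_eq_square power3_eq_cube)
qed
lemma s4d: "(\<Sum>x<n. \<Sum>y<n. \<Sum>z<n. \<Sum>w<(n::nat). ind (x = w)) = real n ^ 3"
proof -
  have "(\<Sum>x<n. \<Sum>y<n. \<Sum>z<n. \<Sum>w<(n::nat). ind (x = w)) = (\<Sum>x<n. \<Sum>y<n. \<Sum>z<n. (1::real))"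
    by (intro sum.cong refl) (simp add: sum_ind_eq)
  then show ?thesis by (simp add: power3_eq_cube)
qed
lemma s4e: "(\<Sum>x<n. \<Sum>y<n. \<Sum>z<n. \<Sum>w<(n::nat). ind (y = w)) = real n ^ 3"
proof -
  have "(\<Sum>x<n. \<Sum>y<n. \<Sum>z<n. \<Sum>w<(n::nat). ind (y = w)) = (\<Sum>x<n. \<Sum>y<n. \<Sum>z<n. (1::real))"
    by (intro sum.cong refl) (simp add: sum_ind_eq)
  then show ?thesis by (simp add: power3_eq_cube)
qed

lemma QQ_GG:
  assumes km: "k \<le> m"
  shows "\<bar>QQ (GG k m) (3*m) - (27 * real m ^ 4 - 12 * real k ^ 2 * real (m - k) ^ 2)\<bar> \<le> 5 * real (3*m) ^ 3"
proof -
  let ?n = "3*m"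
  let ?P = "\<lambda>x y z. Pat (Lab k m x) (Lab k m y) (Lab k m z)"
  have S: "(\<Sum>x<?n. \<Sum>y<?n. \<Sum>z<?n. \<Sum>w<?n. ind (?P x y z \<and> ?P x y w)) = 27 * real m ^ 4 - 12 * real k ^ 2 * real (m - k) ^ 2"
    unfolding sum_PatL2[OF km] sz_eq S4_gen using km by simp
  have Q: "QQ (GG k m) ?n = (\<Sum>x<?n. \<Sum>y<?n. \<Sum>z<?n. \<Sum>w<?n. ind ((x \<noteq> y \<and> x \<noteq> z \<and> y \<noteq> z \<and> ?P x y z) \<and> (x \<noteq> y \<and> x \<noteq> w \<and> y \<noteq> w \<and> ?P x y w)))"
    unfolding QQ_def by (intro sum.cong refl) (simp add: memGG)
  have up: "QQ (GG k m) ?n \<le> (\<Sum>x<?n. \<Sum>y<?n. \<Sum>z<?n. \<Sum>w<?n. ind (?P x y z \<and> ?P x y w))"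
    unfolding Q by (intro sum_mono) (rule ind_ub4)
  have "QQ (GG k m) ?n \<ge> (\<Sum>x<?n. \<Sum>y<?n. \<Sum>z<?n. \<Sum>w<?n. ind (?P x y z \<and> ?P x y w) - ind (x = y) - ind (x = z) - ind (y = z) - ind (x = w) - ind (y = w))"
    unfolding Q by (intro sum_mono) (rule ind_lb4)
  moreover have "(\<Sum>x<?n. \<Sum>y<?n. \<Sum>z<?n. \<Sum>w<?n. ind (?P x y z \<and> ?P x y w) - ind (x = y) - ind (x = z) - ind (y = z) - ind (x = w) - ind (y = w))
    = (\<Sum>x<?n. \<Sum>y<?n. \<Sum>z<?n. \<Sum>w<?n. ind (?P x y z \<and> ?P x y w))
      - (\<Sum>x<?n. \<Sum>y<?n. \<Sum>z<?n. \<Sum>w<?n. ind (x = y)) - (\<Sum>x<?n. \<Sum>y<?n. \<Sum>z<?n. \<Sum>w<?n. ind (x = z))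
      - (\<Sum>x<?n. \<Sum>y<?n. \<Sum>z<?n. \<Sum>w<?n. ind (y = z)) - (\<Sum>x<?n. \<Sum>y<?n. \<Sum>z<?n. \<Sum>w<?n. ind (x = w))
      - (\<Sum>x<?n. \<Sum>y<?n. \<Sum>z<?n. \<Sum>w<?n. ind (y = w))"
    by (simp add: sum_subtractf)
  ultimately have lo: "QQ (GG k m) ?n \<ge> (27 * real m ^ 4 - 12 * real k ^ 2 * real (m - k) ^ 2) - 5 * real ?n ^ 3"
    unfolding S s4a s4b s4c s4d s4e by simp
  show ?thesis using up lo unfolding S by (simp add: abs_le_iff)
qed

lemma pigeon:
  fixes q h :: "nat \<Rightarrow> real"
  assumes sep: "\<And>j j'. j < j' \<Longrightarrow> j' \<le> t \<Longrightarrow> q j - q j' \<ge> D"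
  shows "\<exists>j\<le>t. \<forall>i\<in>{1..t}. \<bar>q j - h i\<bar> \<ge> D / 2"
proof (rule ccontr)
  assume "\<not> ?thesis"
  then have "\<forall>j\<in>{..t}. \<exists>i. i \<in> {1..t} \<and> \<bar>q j - h i\<bar> < D / 2" by force
  then obtain f where f: "\<And>j. j \<in> {..t} \<Longrightarrow> f j \<in> {1..t} \<and> \<bar>q j - h (f j)\<bar> < D / 2"
    by metis
  have "f ` {..t} \<subseteq> {1..t}" using f by blast
  then have "card (f ` {..t}) \<le> t" using card_mono[of "{1..t}" "f ` {..t}"] by simp
  then have "card (f ` {..t}) < card {..t}" by simp
  then have "\<not> inj_on f {..t}" by (rule pigeonhole)
  then obtain j1 j2 where j: "j1 \<in> {..t}" "j2 \<in> {..t}" "j1 \<noteq> j2" "f j1 = f j2"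
    unfolding inj_on_def by blast
  have a: "\<bar>q j1 - h (f j1)\<bar> < D / 2" using f[OF j(1)] by blast
  have b: "\<bar>q j2 - h (f j1)\<bar> < D / 2" using f[OF j(2)] j(4) by simp
  have "\<bar>q j1 - q j2\<bar> < D"
    using a b unfolding abs_less_iff by linarith
  moreover have "j1 < j2 \<or> j2 < j1" using j(3) by linarith
  ultimately show False using sep j(1,2) by fastforce
qed

definition qv :: "nat \<Rightarrow> nat \<Rightarrow> nat \<Rightarrow> real" where
  "qv t r j = 27 * real (2*(t+1)*r) ^ 4 - 12 * real (j*r) ^ 2 * real (2*(t+1)*r - j*r) ^ 2"

lemma qv_sep:
  assumes "j < j'" "j' \<le> t"
  shows "qv t r j - qv t r j' \<ge> 36 * real r ^ 4"
proof -
  define R where "R = real r"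
  define J where "J = real j"
  define J' where "J' = real j'"
  define T where "T = real t"
  have jj: "j \<le> 2*(t+1)" "j' \<le> 2*(t+1)" using assms by auto
  have jr: "j * r \<le> 2*(t+1)*r" "j' * r \<le> 2*(t+1)*r"
    by (rule mult_right_mono[OF jj(1)], simp) (rule mult_right_mono[OF jj(2)], simp)
  define g where "g = J * R * (2*(T+1)*R - J*R)"
  define g' where "g' = J' * R * (2*(T+1)*R - J'*R)"
  have e1: "real (j*r) * real (2*(t+1)*r - j*r) = g"
    unfolding g_def J_def R_def T_def using jr(1) by (simp add: of_nat_diff algebra_simps)
  have e2: "real (j'*r) * real (2*(t+1)*r - j'*r) = g'"
    unfolding g'_def J'_def R_def T_def using jr(2) by (simp add: of_nat_diff algebra_simps)
  have q1: "qv t r j = 27 * real (2*(t+1)*r)^4 - 12 * g^2"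
    unfolding qv_def e1[symmetric] by (simp only: power_mult_distrib mult.assoc)
  have q2: "qv t r j' = 27 * real (2*(t+1)*r)^4 - 12 * g'^2"
    unfolding qv_def e2[symmetric] by (simp only: power_mult_distrib mult.assoc)
  have q: "qv t r j - qv t r j' = 12 * (g'^2 - g^2)"
    unfolding q1 q2 by simp
  have R0: "R \<ge> 0" unfolding R_def by simp
  have a1: "J' - J \<ge> 1" unfolding J_def J'_def using assms(1) by simp
  have a2: "2*T + 2 - J - J' \<ge> 3" unfolding J_def J'_def T_def using assms by simp
  have "(J' - J) * (2*T + 2 - J - J') \<ge> 1 * 3"
    by (rule mult_mono) (use a1 a2 in auto)
  then have d: "g' - g \<ge> 3 * R^2"
  proof -
    have "g' - g = R^2 * ((J' - J) * (2*T + 2 - J - J'))"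
      unfolding g_def g'_def by (simp add: power2_eq_square algebra_simps)
    also have "\<dots> \<ge> R^2 * 3" using \<open>(J' - J) * (2*T + 2 - J - J') \<ge> 1 * 3\<close>
      by (intro mult_left_mono) auto
    finally show ?thesis by simp
  qed
  have g0: "g \<ge> 0" unfolding e1[symmetric] by simp
  have "g'^2 - g^2 = (g' - g) * (g' + g)" by (simp add: power2_eq_square algebra_simps)
  also have "\<dots> \<ge> (3 * R^2) * (3 * R^2)"
  proof (rule mult_mono)
    have "R^2 \<ge> 0" by simp
    then show "3 * R^2 \<le> g' + g" "0 \<le> g' - g" "0 \<le> 3 * R^2" using d g0 by linarith+
  qed (use d in simp)
  finally have "g'^2 - g^2 \<ge> 9 * R^4" by (simp add: power2_eq_square power4_eq_xxxx)
  moreover have "real r ^ 4 \<ge> 0" by simp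
  ultimately have h: "g'^2 - g^2 \<ge> 3 * real r ^ 4" unfolding R_def by linarith
  show ?thesis unfolding q using h by simp
qed

lemma choose3_le: "real (n choose 3) \<le> real n ^ 3 / 6"
proof -
  have rg: "is_rgraph 3 n {e. e \<subseteq> {..<n} \<and> card e = 3}" by (simp add: is_rgraph_def)
  have "card {e. e \<subseteq> {..<n} \<and> card e = 3} = n choose 3"
    using n_subsets[of "{..<n}" 3] by simp
  then show ?thesis using card_le_cube[OF rg] by simp
qed

lemma img_rgraph:
  assumes s: "bij_betw s {..<n} {..<n}" and H: "is_rgraph 3 n H"
  shows "is_rgraph 3 n (image s ` H)"
  unfolding is_rgraph_def
proof
  fix e' assume "e' \<in> image s ` H"
  then obtain e where e: "e \<in> H" "e' = s ` e" by auto
  have "e \<subseteq> {..<n}" "card e = 3" using H e(1) by (auto simp: is_rgraph_def)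
  moreover have "inj_on s {..<n}" using s bij_betw_def by blast
  ultimately have "card (s ` e) = 3" by (metis card_image inj_on_subset)
  moreover have "s ` e \<subseteq> {..<n}" using \<open>e \<subseteq> {..<n}\<close> s bij_betw_imp_surj_on by blast
  ultimately show "e' \<subseteq> {..<n} \<and> card e' = 3" using e(2) by simp
qed

lemma diff_rgraph: "is_rgraph 3 n G \<Longrightarrow> is_rgraph 3 n K \<Longrightarrow> is_rgraph 3 n ((G - K) \<union> (K - G))"
  by (auto simp: is_rgraph_def)

theorem proposition1p10:
  assumes "\<forall>l::nat\<ge>4. turan_density 3 {K3 l} = 1 - (2 / (real l - 1))^2"
  shows "stability_number 3 {K3 4} = \<infinity>"
proof -
  have lim: "aseq \<longlonglongrightarrow> 5/9" by (rule aseq_tendsto[OF assms])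
  have "\<not> t_stable 3 {K3 4} t" for t
  proof
    assume "t_stable 3 {K3 4} t"
    then obtain m0 and Hs :: "nat \<Rightarrow> nat \<Rightarrow> nat set set" where
      rg: "\<forall>m\<ge>m0. \<forall>i\<in>{1..t}. is_rgraph 3 m (Hs m i)"
      and st: "\<forall>\<delta>::real. \<delta> > 0 \<longrightarrow> (\<exists>\<epsilon>::real. \<epsilon> > 0 \<and> (\<exists>n0::nat. \<forall>n\<ge>n0. \<forall>H.
            is_rgraph 3 n H \<and> family_free {K3 4} n H \<and>
            real (card H) > (1 - \<epsilon>) * real (exK n) \<longrightarrow>
            (\<exists>i\<in>{1..t}. \<exists>\<sigma>. bij_betw \<sigma> {..<n} {..<n} \<and>
               real (card ((H - (image \<sigma>) ` Hs n i) \<union> ((image \<sigma>) ` Hs n i - H)))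
                 \<le> \<delta> * real (card H))))"
      unfolding t_stable_def by blast
    define c :: nat where "c = 6*(t+1)"
    have cpos: "c > 0" unfolding c_def by simp
    define \<delta> :: real where "\<delta> = 1 / real c ^ 4"
    have \<delta>pos: "\<delta> > 0" unfolding \<delta>_def using cpos by simp
    obtain \<epsilon> n0 where \<epsilon>pos: "\<epsilon> > 0" and H0: "\<forall>n\<ge>n0. \<forall>H.
            is_rgraph 3 n H \<and> family_free {K3 4} n H \<and>
            real (card H) > (1 - \<epsilon>) * real (exK n) \<longrightarrow>
            (\<exists>i\<in>{1..t}. \<exists>\<sigma>. bij_betw \<sigma> {..<n} {..<n} \<and>
               real (card ((H - (image \<sigma>) ` Hs n i) \<union> ((image \<sigma>) ` Hs n i - H)))
                 \<le> \<delta> * real (card H))"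
      using st \<delta>pos by blast
    define \<epsilon>' where "\<epsilon>' = min \<epsilon> (1/2)"
    have e1: "\<epsilon>' > 0" "\<epsilon>' \<le> \<epsilon>" "\<epsilon>' \<le> 1/2" unfolding \<epsilon>'_def using \<epsilon>pos by auto
    have "eventually (\<lambda>n. aseq n < 5/9 + \<epsilon>'/4) sequentially"
      using order_tendstoD(2)[OF lim] e1(1) by simp
    then obtain N where N: "\<And>n. n \<ge> N \<Longrightarrow> aseq n < 5/9 + \<epsilon>'/4"
      unfolding eventually_sequentially by blast
    define r where "r = c^3 + N + n0 + m0 + nat \<lceil>10/\<epsilon>'\<rceil> + 3"
    define m where "m = 2*(t+1)*r"
    define n where "n = 3*m"
    have n_eq: "n = c * r" unfolding n_def m_def c_def by (simp add: algebra_simps)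
    have rN: "r \<ge> N" "r \<ge> n0" "r \<ge> m0" "r \<ge> 3" "r \<ge> c^3 + 1" unfolding r_def by auto
    have r10: "real r \<ge> 10/\<epsilon>'"
    proof -
      have "10/\<epsilon>' \<le> real (nat \<lceil>10/\<epsilon>'\<rceil>)" by linarith
      also have "\<dots> \<le> real r" unfolding r_def by simp
      finally show ?thesis .
    qed
    have nr: "n \<ge> r" unfolding n_eq using cpos by simp
    have "\<exists>j\<le>t. \<forall>i\<in>{1..t}. \<bar>qv t r j - QQ (Hs n i) n\<bar> \<ge> 36 * real r ^ 4 / 2"
      by (rule pigeon) (rule qv_sep)
    then obtain j where j: "j \<le> t" "\<forall>i\<in>{1..t}. \<bar>qv t r j - QQ (Hs n i) n\<bar> \<ge> 36 * real r ^ 4 / 2"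
      by blast
    define k where "k = j*r"
    have "j \<le> 2*(t+1)" using j(1) by simp
    then have km: "k \<le> m" unfolding k_def m_def by (rule mult_right_mono) simp
    define G where "G = GG k m"
    have Grg: "is_rgraph 3 n G" unfolding G_def n_def by (rule GG_rgraph)
    have Gfree: "family_free {K3 4} n G" unfolding G_def n_def by (rule GG_free)
    have cG: "6 * real (card G) \<ge> 15 * real m ^ 3 - 3 * real n ^ 2"
      using E3_GG_lb[OF km] E3_card[OF Grg] unfolding G_def n_def by simp
    have cG_up: "real (card G) \<le> real n ^ 3 / 6" by (rule card_le_cube[OF Grg])
    have big: "real (card G) > (1 - \<epsilon>) * real (exK n)"
    proof -
      define X where "X = real n"
      have X3: "X \<ge> 3" unfolding X_def using nr rN(4) by simp
      have m3: "15 * real m ^ 3 = 5/9 * X^3" unfolding X_def n_def by (simp add: power3_eq_cube)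
      have Cpos: "real (n choose 3) > 0" using nr rN(4) by simp
      have ex_eq: "real (exK n) = aseq n * real (n choose 3)"
        unfolding aseq_def using Cpos by simp
      have "aseq n < 5/9 + \<epsilon>'/4" using N nr rN(1) by simp
      then have "real (exK n) \<le> (5/9 + \<epsilon>'/4) * real (n choose 3)"
        unfolding ex_eq using Cpos by (intro mult_right_mono) auto
      also have "\<dots> \<le> (5/9 + \<epsilon>'/4) * (X^3 / 6)"
        using choose3_le[of n] e1(1) unfolding X_def by (intro mult_left_mono) auto
      finally have exb: "real (exK n) \<le> (5/9 + \<epsilon>'/4) * (X^3 / 6)" .
      have "(1 - \<epsilon>) * real (exK n) \<le> (1 - \<epsilon>') * real (exK n)"
        using e1(2) by (intro mult_right_mono) auto
      also have "\<dots> \<le> (1 - \<epsilon>') * ((5/9 + \<epsilon>'/4) * (X^3 / 6))"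
        using exb e1(3) by (intro mult_left_mono) auto
      also have "\<dots> = (5/9 * X^3 - (11/36) * \<epsilon>' * X^3 - \<epsilon>'^2/4 * X^3) / 6"
        by (simp add: field_simps power2_eq_square)
      also have "\<dots> \<le> (5/9 * X^3 - (11/36) * \<epsilon>' * X^3) / 6"
        using X3 by simp
      also have "\<dots> < (5/9 * X^3 - 3 * X^2) / 6"
      proof -
        have "\<epsilon>' * X \<ge> 10"
        proof -
          have "X \<ge> 10/\<epsilon>'" unfolding X_def using r10 of_nat_mono[OF nr, where 'a=real] by linarith
          then show ?thesis using e1(1) by (simp add: field_simps)
        qed
        then have "(\<epsilon>' * X) * X^2 \<ge> 10 * X^2" by (intro mult_right_mono) auto
        moreover have "X^2 > 0" using X3 by simp
        ultimately have "(11/36) * \<epsilon>' * X^3 > 3 * X^2"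
          by (simp add: power2_eq_square power3_eq_cube algebra_simps)
        then show ?thesis by simp
      qed
      also have "\<dots> \<le> real (card G)" using cG m3 unfolding X_def by simp
      finally show ?thesis .
    qed
    obtain i \<sigma> where i: "i \<in> {1..t}" and \<sigma>: "bij_betw \<sigma> {..<n} {..<n}"
      and close: "real (card ((G - (image \<sigma>) ` Hs n i) \<union> ((image \<sigma>) ` Hs n i - G))) \<le> \<delta> * real (card G)"
      using H0 nr rN(2) Grg Gfree big by (meson le_trans)
    define K where "K = image \<sigma> ` Hs n i"
    have Hrg: "is_rgraph 3 n (Hs n i)" using rg nr rN(3) i by auto
    have QK: "QQ K n = QQ (Hs n i) n" unfolding K_def by (rule QQ_perm[OF \<sigma> rgraph_Pow[OF Hrg]])
    have Krg: "is_rgraph 3 n K" unfolding K_def by (rule img_rgraph[OF \<sigma> Hrg])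
    have Drg: "is_rgraph 3 n ((G - K) \<union> (K - G))" by (rule diff_rgraph[OF Grg Krg])
    have lip: "\<bar>QQ G n - QQ K n\<bar> \<le> 12 * real n * real (card ((G - K) \<union> (K - G)))"
      using QQ_lip[of G n K] E3_card[OF Drg] by simp
    have qv_eq: "qv t r j = 27 * real m ^ 4 - 12 * real k ^ 2 * real (m - k) ^ 2"
      unfolding qv_def m_def k_def ..
    have qG: "\<bar>QQ G n - qv t r j\<bar> \<le> 5 * real n ^ 3"
      using QQ_GG[OF km] unfolding qv_eq G_def n_def .
    have sep: "\<bar>qv t r j - QQ (Hs n i) n\<bar> \<ge> 18 * real r ^ 4" using j(2) i by simp
    define R where "R = real r"
    define C where "C = real c"
    have nCR: "real n = C * R" unfolding n_eq C_def R_def by simp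
    have Cpos: "C > 0" unfolding C_def using cpos by simp
    have d1: "real (card ((G - K) \<union> (K - G))) \<le> \<delta> * (real n ^ 3 / 6)"
      using close cG_up \<delta>pos unfolding K_def by (meson order_trans mult_left_mono less_imp_le)
    have "12 * real n * real (card ((G - K) \<union> (K - G))) \<le> 12 * real n * (\<delta> * (real n ^ 3 / 6))"
      using d1 by (intro mult_left_mono) auto
    also have "\<dots> = 2 * \<delta> * real n ^ 4" by (simp add: power3_eq_cube power4_eq_xxxx)
    also have "\<dots> = 2 * R ^ 4" unfolding \<delta>_def nCR using Cpos
      by (simp add: power_mult_distrib C_def)
    finally have lipb: "\<bar>QQ G n - QQ K n\<bar> \<le> 2 * R ^ 4" using lip by linarith
    have "18 * R ^ 4 \<le> 5 * real n ^ 3 + 2 * R ^ 4"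
      using sep qG lipb QK unfolding R_def by (smt (verit))
    then have h16: "16 * R ^ 4 \<le> 5 * C ^ 3 * R ^ 3" unfolding nCR by (simp add: power_mult_distrib)
    have "real (c^3 + 1) \<le> real r" using rN(5) by (rule of_nat_mono)
    then have Rge: "R \<ge> C ^ 3 + 1" unfolding R_def C_def by simp
    have C3: "C ^ 3 > 0" using Cpos by simp
    have R0: "R > 0" using Rge C3 by linarith
    have R3: "R ^ 3 > 0" using R0 by simp
    have "R ^ 4 = R * R ^ 3" by (simp add: power4_eq_xxxx power3_eq_cube)
    also have "\<dots> \<ge> (C ^ 3 + 1) * R ^ 3" using Rge R3 by (intro mult_right_mono) auto
    finally have f: "16 * ((C ^ 3 + 1) * R ^ 3) \<le> 5 * C ^ 3 * R ^ 3" using h16 by linarith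
    have P: "C ^ 3 * R ^ 3 > 0" using C3 R3 by (rule mult_pos_pos)
    have e1: "16 * ((C ^ 3 + 1) * R ^ 3) = 16 * (C ^ 3 * R ^ 3) + 16 * R ^ 3" by (simp add: algebra_simps)
    have e2: "5 * C ^ 3 * R ^ 3 = 5 * (C ^ 3 * R ^ 3)" by simp
    show False using f P R3 unfolding e1 e2 by linarith
  qed
  then show ?thesis unfolding stability_number_def by auto
qed

end
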